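(* Let $p$ be an odd prime, $n$ a positive integer, $N=p^n$, and $\omega_N=e^{2\pi\sqrt{-1}/N}$. For $1\le k\le n$ let $D_0^{(p^k)}$ (resp. $D_1^{(p^k)}$) be the set of nonzero squares (resp. non-squares) among the units of $\mathbb{Z}_{p^k}$, i.e. $D_i^{(p^k)}=\{g^{2t+i}\bmod p^k\mid t=0,\dots,\frac{(p-1)p^{k-1}}{2}-1\}$ for a primitive root $g$ modulo $p^n$. For $0\le m<k\le n$ and $i\in\{0,1\}$, regard $p^{m}D_i^{(p^{k})}=\{p^{m}x\bmod p^{m+k} : x\in D_i^{(p^k)}\}$, and in particular $p^{n-k}D_i^{(p^k)}$ and $p^mD_i^{(p^{n-m})}$ as subsets of $\mathbb{Z}_{p^n}$. Let $$C_1=\{0\}\cup\bigcup_{k=1}^{n}p^{n-k}D_1^{(p^k)}\subseteq\mathbb{Z}_{p^n},$$ and define the binary sequence $(s_i)$ of period $N$ by $s_i=1$ if $i\bmod N\in C_1$ and $s_i=0$ otherwise. Let $S(x)=\sum_{i=0}^{N-1}s_ix^i$. Let $\eta_i^{(p)}=\sum_{x\in D_i^{(p)}}e^{2\pi\sqrt{-1}x/p}$ for $i=0,1$. Then for $a\in\mathbb{Z}_{N}$: $$S(\omega_N^a)=\begin{cases}\frac{p^n+1}{2}, & a=0,\\[2pt] \frac{p^m+1}{2}+p^m\eta_1^{(p)}, & a\in p^mD_0^{(p^{n-m})},\ m\in\{0,1,\dots,n-1\},\\[2pt] \frac{p^m+1}{2}+p^m\eta_0^{(p)}, & a\in p^mD_1^{(p^{n-m})},\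 m\in\{0,1,\dots,n-1\}.\end{cases}$$
   Context: The sequence $(s_i)$ is the Ding–Helleseth generalized cyclotomic sequence of period $p^n$. The sets $\{0\}$, $p^{n-k}D_0^{(p^k)}$, $p^{n-k}D_1^{(p^k)}$ ($1\le k\le n$) partition $\mathbb{Z}_{p^n}$. *)

theory Defs
  imports "HOL-Analysis.Analysis" "HOL-Number_Theory.Number_Theory"
begin

definition Dsq :: "nat \<Rightarrow> nat \<Rightarrow> nat set" where
  "Dsq p k = {x \<in> {0..<p^k}. coprime x p \<and> (\<exists>y. [y^2 = x] (mod p^k))}"

definition Dnsq :: "nat \<Rightarrow> nat \<Rightarrow> nat set" where
  "Dnsq p k = {x \<in> {0..<p^k}. coprime x p \<and> \<not> (\<exists>y. [y^2 = x] (mod p^k))}"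

definition D :: "nat \<Rightarrow> nat \<Rightarrow> nat \<Rightarrow> nat set" where
  "D i p k = (if i = 0 then Dsq p k else Dnsq p k)"

definition scaledD :: "nat \<Rightarrow> nat \<Rightarrow> nat \<Rightarrow> nat \<Rightarrow> nat set" where
  "scaledD m i p k = (\<lambda>x. (p^m * x) mod p^(m+k)) ` D i p k"

definition C1 :: "nat \<Rightarrow> nat \<Rightarrow> nat set" where
  "C1 p n = {0} \<union> (\<Union>k\<in>{1..n}. scaledD (n - k) 1 p k)"

definition dh_seq :: "nat \<Rightarrow> nat \<Rightarrow> nat \<Rightarrow> nat" where
  "dh_seq p n i = (if i mod p^n \<in> C1 p n then 1 else 0)"

definition omega :: "nat \<Rightarrow> complex" where
  "omega N = exp (2 * pi * \<i> / of_nat N)"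

definition S_poly :: "nat \<Rightarrow> nat \<Rightarrow> complex \<Rightarrow> complex" where
  "S_poly p n x = (\<Sum>i<p^n. of_nat (dh_seq p n i) * x ^ i)"

definition eta :: "nat \<Rightarrow> nat \<Rightarrow> complex" where
  "eta i p = (\<Sum>x\<in>D i p 1. exp (2 * pi * \<i> * of_nat x / of_nat p))"

end

theory Submission
  imports Defs
begin


definition sqm :: "nat \<Rightarrow> nat \<Rightarrow> bool" where
  "sqm M x = (\<exists>y::nat. [y^2 = x] (mod M))"

lemma sqm_int: "sqm M x \<longleftrightarrow> QuadRes (int M) (int x)"
proof
  assume "sqm M x" then obtain y where "[y^2 = x] (mod M)" by (auto simp: sqm_def)
  hence "[int y ^2 = int x] (mod int M)" by (metis cong_int_iff of_nat_power)
  thus "QuadRes (int M) (int x)" by (auto simp: QuadRes_def)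
next
  assume "QuadRes (int M) (int x)"
  then obtain y where y: "[y^2 = int x] (mod int M)" by (auto simp: QuadRes_def)
  show "sqm M x"
  proof (cases "M = 0")
    case True
    then have "y^2 = int x" using y by (simp add: cong_def)
    hence "int (nat \<bar>y\<bar> ^2) = int x" by simp
    hence "nat \<bar>y\<bar> ^2 = x" using of_nat_eq_iff by blast
    thus ?thesis unfolding sqm_def by (metis cong_refl)
  next
    case False
    define z where "z = nat (y mod int M)"
    have "int z = y mod int M" using False by (simp add: z_def)
    hence "[int z = y] (mod int M)" by (simp add: cong_def)
    hence "[int z ^ 2 = y^2] (mod int M)" by (simp add: cong_pow)
    hence "[int (z^2) = int x] (mod int M)" using y cong_trans by (metis of_nat_power)
    hence "[z^2 = x] (mod M)" using cong_int_iff by blast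
    thus ?thesis unfolding sqm_def by blast
  qed
qed

lemma sqm_down: assumes "sqm M x" "d dvd M" shows "sqm d x"
  using assms cong_dvd_modulus_nat unfolding sqm_def by blast

lemma sqm_mod: "sqm M (x mod M) \<longleftrightarrow> sqm M x"
  unfolding sqm_def cong_def by simp

lemma hensel_int:
  fixes p x :: int
  assumes p: "prime p" "odd p" and cx: "coprime x p" and sq: "[y^2 = x] (mod p)" and k: "k \<ge> 1"
  shows "\<exists>z. [z^2 = x] (mod p^k)"
  using k
proof (induction k rule: dec_induct)
  case base then show ?case using sq by auto
next
  case (step k)
  then obtain z where z: "[z^2 = x] (mod p^k)" by auto
  have "p dvd p^k" using step(1) by (simp add: dvd_power)
  hence "[z^2 = x] (mod p)" using z cong_dvd_modulus by blast
  hence "coprime (z^2) p" using cx by (metis cong_imp_coprime cong_sym)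
  hence c1: "coprime z p" using coprime_power_left_iff[of z 2 p] by auto
  have "\<not> p dvd 2"
  proof
    assume "p dvd 2"
    hence "p \<le> 2" by (rule zdvd_imp_le) simp
    moreover have "p \<ge> 2" using p(1) prime_ge_2_int by blast
    ultimately have "p = 2" by simp
    thus False using p(2) by simp
  qed
  hence "coprime p 2" using p(1) prime_imp_coprime by blast
  hence c2: "coprime 2 p" by (rule coprime_commute[THEN iffD1])
  have cz: "coprime (2*z) p" unfolding coprime_mult_left_iff using c1 c2 by blast
  obtain w where w: "[2*z*w = 1] (mod p)" using cong_solve_coprime_int[OF cz] by auto
  obtain c where c: "z^2 - x = p^k * c" using z by (metis cong_iff_dvd_diff cong_sym_eq dvdE)
  define t where "t = - c * w"
  have "p dvd c + 2*z*t"
  proof -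
    have eq: "c + 2*z*t = c - c * (2*z*w)" by (simp add: t_def algebra_simps)
    have "[c + 2*z*t = c - c * (2*z*w)] (mod p)" by (simp only: eq cong_refl)
    moreover have "[c - c * (2*z*w) = c - c*1] (mod p)" by (rule cong_diff[OF cong_refl cong_mult[OF cong_refl w]])
    ultimately have "[c + 2*z*t = c - c*1] (mod p)" by (rule cong_trans)
    hence "[c + 2*z*t = 0] (mod p)" by simp
    thus ?thesis by (simp only: cong_0_iff)
  qed
  then obtain e where e: "c + 2*z*t = p * e" by (rule dvdE)
  have pw: "p^(2*k) = p^(Suc k) * p^(k-1)"
  proof -
    have "2*k = Suc k + (k - 1)" using step(1) by simp
    thus ?thesis by (simp only: power_add)
  qed
  have pk2: "(p^k)^2 = p^(2*k)" by (simp add: power_mult[symmetric] mult.commute)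
  have "(z + t*p^k)^2 - x = (z^2 - x) + 2*z*t*p^k + t^2*(p^k)^2"
    by (simp add: power2_eq_square algebra_simps)
  also have "\<dots> = p^k * (c + 2*z*t) + t^2 * p^(2*k)" using c pk2 by (simp add: algebra_simps)
  also have "\<dots> = p^k * (p * e) + t^2 * (p^(Suc k) * p^(k-1))" using e pw by simp
  also have "\<dots> = p^(Suc k) * (e + t^2 * p^(k - 1))" by (simp add: algebra_simps)
  finally have "[(z + t*p^k)^2 = x] (mod p^Suc k)" by (metis cong_iff_dvd_diff cong_sym dvd_triv_left)
  thus ?case by blast
qed



lemma qr_mult_int:
  fixes p :: nat and x r :: int
  assumes p: "prime p" "p > 2" and x: "\<not> int p dvd x" and r: "\<not> int p dvd r"
  shows "QuadRes p (x*r) \<longleftrightarrow> (QuadRes p x \<longleftrightarrow> QuadRes p r)"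
proof -
  define h where "h = nat ((p - 1) div 2)"
  define L where "L a = (if QuadRes p a then 1 else (-1::int))" for a
  have pi: "prime (int p)" using p by simp
  have xr: "\<not> int p dvd x*r" using x r pi by (simp add: prime_dvd_mult_iff)
  have LL: "Legendre a p = L a" if "\<not> int p dvd a" for a
    using that by (simp add: Legendre_def L_def cong_0_iff)
  have e: "[L a = a ^ h] (mod p)" if "\<not> int p dvd a" for a
    using euler_criterion[OF p, of a] LL[OF that] by (simp add: h_def)
  have "[L (x*r) = (x*r)^h] (mod p)" using e[OF xr] .
  also have "(x*r)^h = x^h * r^h" by (simp add: power_mult_distrib)
  also have "[x^h * r^h = L x * L r] (mod p)" using e[OF x] e[OF r] by (intro cong_mult) (auto simp: cong_sym)
  finally have c: "[L (x*r) = L x * L r] (mod p)" .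
  have "L (x*r) = L x * L r"
  proof (rule ccontr)
    assume ne: "L (x*r) \<noteq> L x * L r"
    have "int p dvd L (x*r) - L x * L r" using c by (simp add: cong_iff_dvd_diff)
    moreover have "\<bar>L (x*r) - L x * L r\<bar> = 2" using ne by (auto simp: L_def split: if_splits)
    ultimately have "int p dvd 2" using dvd_abs_iff[of "int p" "L (x*r) - L x * L r"] by simp
    hence "p dvd 2" using int_dvd_int_iff[of p 2] by simp
    hence "p \<le> 2" by (simp add: dvd_imp_le)
    thus False using p by simp
  qed
  thus ?thesis by (auto simp: L_def split: if_splits)
qed

lemma qr_mult:
  fixes p x r :: nat
  assumes p: "prime p" "odd p" and x: "coprime x p" and r: "coprime r p"
  shows "sqm p (x*r) \<longleftrightarrow> (sqm p x \<longleftrightarrow> sqm p r)"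
proof -
  have p2: "p > 2" using prime_ge_2_nat[OF p(1)] p(2) by (cases "p = 2") auto
  have "\<not> int p dvd int x" using coprime_common_divisor[OF x _ dvd_refl] not_prime_unit p(1) by auto
  moreover have "\<not> int p dvd int r" using coprime_common_divisor[OF r _ dvd_refl] not_prime_unit p(1) by auto
  ultimately show ?thesis using qr_mult_int[OF p(1) p2] by (simp add: sqm_int)
qed

lemma D1_simps:
  "Dsq p 1 = {x\<in>{0..<p}. coprime x p \<and> sqm p x}"
  "Dnsq p 1 = {x\<in>{0..<p}. coprime x p \<and> \<not> sqm p x}"
  by (auto simp: Dsq_def Dnsq_def sqm_def)

lemma D1_simps':
  "Dsq p (Suc 0) = {x\<in>{0..<p}. coprime x p \<and> sqm p x}"
  "Dnsq p (Suc 0) = {x\<in>{0..<p}. coprime x p \<and> \<not> sqm p x}"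
  using D1_simps by simp_all

lemma mul_inj:
  fixes p g :: nat
  assumes "coprime g p"
  shows "inj_on (\<lambda>x. g*x mod p) {..<p}"
proof
  fix x y assume "x \<in> {..<p}" "y \<in> {..<p}" "g*x mod p = g*y mod p"
  hence "[g*x = g*y] (mod p)" "x < p" "y < p" by (auto simp: cong_def)
  hence "[x = y] (mod p)" using cong_mult_lcancel_nat[OF assms] by blast
  thus "x = y" using \<open>x<p\<close> \<open>y<p\<close> by (simp add: cong_def)
qed

lemma units_eq:
  fixes p :: nat assumes p: "prime p"
  shows "x \<in> {1..<p} \<longleftrightarrow> x < p \<and> coprime x p"
proof -
  have "coprime x p" if "1 \<le> x" "x < p" for x
  proof -
    have "\<not> p dvd x" using that nat_dvd_not_less by auto
    hence "coprime p x" using prime_imp_coprime_nat[OF p] by blast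
    thus ?thesis by (rule coprime_commute[THEN iffD1])
  qed
  moreover have "\<not> coprime 0 p" using prime_gt_1_nat[OF p] by simp
  ultimately show ?thesis by (cases "x = 0") auto
qed

lemma exists_nonres:
  fixes p :: nat
  assumes p: "prime p" "odd p"
  shows "\<exists>g. g \<in> Dnsq p 1"
proof -
  have p1: "p > 1" using p prime_gt_1_nat by blast
  have p3: "p \<ge> 3" using prime_ge_2_nat[OF p(1)] p(2) by (cases "p = 2") auto
  define A where "A = {1..<p}"
  define s where "s y = y^2 mod p" for y
  have cA: "x \<in> A \<longleftrightarrow> x < p \<and> coprime x p" for x
    using units_eq[OF p(1)] unfolding A_def by blast
  have sA: "s ` A \<subseteq> A"
  proof
    fix z assume "z \<in> s ` A"
    then obtain y where y: "y \<in> A" "z = y^2 mod p" by (auto simp: s_def)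
    have "coprime (y^2) p" using y cA by simp
    hence "coprime z p" using y p1 by simp
    moreover have "z < p" using y p1 by simp
    ultimately show "z \<in> A" using cA by blast
  qed
  define q where "q = p - 2"
  have q: "p = q + 2" using p3 by (simp add: q_def)
  have "(p-1)^2 = p*q + 1" using q by (simp add: power2_eq_square algebra_simps)
  moreover have "(1 + p*q) mod p = 1" using mod_mult_self2[of 1 p q] p1 by simp
  ultimately have "s (p-1) = 1" by (simp add: s_def)
  moreover have "s 1 = 1" using p1 by (simp add: s_def)
  moreover have "1 \<in> A" "p - 1 \<in> A" "1 \<noteq> p - 1" using p3 by (auto simp: A_def)
  ultimately have ni: "\<not> inj_on s A" using inj_onD[of s A 1 "p-1"] by auto
  have "s ` A \<noteq> A"
  proof
    assume "s ` A = A"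
    hence "inj_on s A" by (intro eq_card_imp_inj_on) (auto simp: A_def)
    thus False using ni by blast
  qed
  then obtain g where g: "g \<in> A" "g \<notin> s ` A" using sA by blast
  have "\<not> sqm p g"
  proof
    assume "sqm p g"
    then obtain y where y: "[y^2 = g] (mod p)" by (auto simp: sqm_def)
    have "y^2 mod p = g" using y g cA by (simp add: cong_def)
    have "coprime (y^2 mod p) p" using \<open>y^2 mod p = g\<close> g cA by simp
    hence "coprime y p" using p1 by simp
    hence "y mod p \<in> A" using cA p1 by simp
    moreover have "s (y mod p) = g" using \<open>y^2 mod p = g\<close> by (simp add: s_def power_mod)
    ultimately show False using g by blast
  qed
  thus ?thesis using g cA D1_simps by auto
qed

lemma card_D1:
  fixes p :: nat
  assumes p: "prime p" "odd p"
  shows "card (Dnsq p 1) = (p - 1) div 2" "card (Dsq p 1) = (p - 1) div 2"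
proof -
  have p1: "p > 1" using p prime_gt_1_nat by blast
  obtain g where g: "g \<in> Dnsq p 1" using exists_nonres[OF p] by blast
  have gc: "coprime g p" "\<not> sqm p g" using g D1_simps by auto
  define f where "f x = g*x mod p" for x
  have inj: "inj_on f A" if "A \<subseteq> {..<p}" for A using mul_inj[OF gc(1)] that by (auto simp: f_def inj_on_def)
  have fs: "coprime (f x) p \<and> (sqm p (f x) \<longleftrightarrow> \<not> sqm p x) \<and> f x < p" if "coprime x p" for x
    using qr_mult[OF p gc(1) that] gc that p1 by (simp add: f_def sqm_mod)
  define Q where "Q = {x\<in>{0..<p}. coprime x p \<and> sqm p x}"
  define N where "N = {x\<in>{0..<p}. coprime x p \<and> \<not> sqm p x}"
  have QN: "Dsq p 1 = Q" "Dnsq p 1 = N" using D1_simps Q_def N_def by auto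
  have iQ: "inj_on f Q" by (rule inj) (auto simp: Q_def)
  have iN: "inj_on f N" by (rule inj) (auto simp: N_def)
  have "card Q \<le> card N"
    by (rule card_inj_on_le[OF iQ]) (use fs in \<open>auto simp: Q_def N_def\<close>)
  moreover have "card N \<le> card Q"
    by (rule card_inj_on_le[OF iN]) (use fs in \<open>auto simp: Q_def N_def\<close>)
  ultimately have eq: "card (Dsq p 1) = card (Dnsq p 1)" using QN by simp
  have "Q \<union> N = {x\<in>{0..<p}. coprime x p}" unfolding Q_def N_def by blast
  also have "\<dots> = {1..<p}"
  proof (intro equalityI subsetI)
    fix x assume "x \<in> {x\<in>{0..<p}. coprime x p}" thus "x \<in> {1..<p}"
      using units_eq[OF p(1), of x] by simp
  next
    fix x assume "x \<in> {1..<p}" thus "x \<in> {x\<in>{0..<p}. coprime x p}"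
      using units_eq[OF p(1), of x] by simp
  qed
  finally have "Q \<union> N = {1..<p}" .
  moreover have "Q \<inter> N = {}" unfolding Q_def N_def by blast
  moreover have "finite Q" "finite N" unfolding Q_def N_def by auto
  ultimately have "card Q + card N = p - 1" using card_Un_disjoint[of Q N] by simp
  hence "card (Dsq p 1) + card (Dnsq p 1) = p - 1" using QN by simp
  thus "card (Dnsq p 1) = (p - 1) div 2" "card (Dsq p 1) = (p - 1) div 2" using eq by auto
qed



lemma sqm_lift:
  fixes p x k :: nat
  assumes p: "prime p" "odd p" and cx: "coprime x p" and sq: "sqm p x" and k: "k \<ge> 1"
  shows "sqm (p^k) x"
proof -
  have pi: "prime (int p)" "odd (int p)" using p by auto
  have cxi: "coprime (int x) (int p)" using cx by simp
  obtain y where y: "[y^2 = int x] (mod int p)" using sq by (auto simp: sqm_int QuadRes_def)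
  obtain z where "[z^2 = int x] (mod (int p)^k)" using hensel_int[OF pi cxi y k] by blast
  hence "QuadRes (int (p^k)) (int x)" by (auto simp: QuadRes_def)
  thus ?thesis by (simp add: sqm_int)
qed

lemma sq_iff:
  fixes p x k :: nat
  assumes p: "prime p" "odd p" and cx: "coprime x p" and k: "k \<ge> 1"
  shows "sqm (p^k) x \<longleftrightarrow> sqm p (x mod p)"
proof
  assume "sqm (p^k) x"
  hence "sqm p x" by (rule sqm_down) (use k in \<open>simp add: dvd_power\<close>)
  thus "sqm p (x mod p)" by (simp add: sqm_mod)
next
  assume "sqm p (x mod p)"
  hence "sqm p x" by (simp add: sqm_mod)
  thus "sqm (p^k) x" using sqm_lift[OF p cx _ k] by blast
qed

lemma Dnsq_mem:
  fixes p x k :: nat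
  assumes p: "prime p" "odd p" and k: "k \<ge> 1"
  shows "x \<in> Dnsq p k \<longleftrightarrow> x < p^k \<and> x mod p \<in> Dnsq p 1"
proof -
  have p0: "p \<noteq> 0" using p prime_gt_0_nat by blast
  have "coprime (x mod p) p \<longleftrightarrow> coprime x p" using p0 by simp
  moreover have "sqm (p^k) x \<longleftrightarrow> sqm p (x mod p)" if "coprime x p" using sq_iff[OF p that k] .
  moreover have "x mod p < p" using p0 by simp
  ultimately show ?thesis unfolding D1_simps D1_simps' by (auto simp: Dnsq_def sqm_def[symmetric])
qed

lemma Dsq_mod:
  fixes p x k :: nat
  assumes p: "prime p" "odd p" and k: "k \<ge> 1" and x: "x \<in> Dsq p k"
  shows "x mod p \<in> Dsq p 1" "coprime x p"
proof -
  have p0: "p \<noteq> 0" using p prime_gt_0_nat by blast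
  have c: "coprime x p" "sqm (p^k) x" using x by (auto simp: Dsq_def sqm_def)
  thus "coprime x p" by simp
  have "sqm p (x mod p)" using sq_iff[OF p c(1) k] c by simp
  thus "x mod p \<in> Dsq p 1" using c p0 unfolding D1_simps D1_simps' by simp
qed

lemma Dnsq_mod:
  fixes p x k :: nat
  assumes p: "prime p" "odd p" and k: "k \<ge> 1" and x: "x \<in> Dnsq p k"
  shows "x mod p \<in> Dnsq p 1" "coprime x p"
  using Dnsq_mem[OF p k, of x] x by (auto simp: Dnsq_def)

lemma Dnsq_decomp:
  fixes p k :: nat
  assumes p: "prime p" "odd p" and k: "k \<ge> 1"
  shows "Dnsq p k = (\<lambda>(r,q). r + p*q) ` (Dnsq p 1 \<times> {..<p^(k-1)})"
    "inj_on (\<lambda>(r,q). r + p*q) (Dnsq p 1 \<times> {..<p^(k-1)})"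
proof -
  have p0: "p > 0" using p prime_gt_0_nat by blast
  have pk: "p^k = p * p^(k-1)" using k by (simp add: power_eq_if)
  have rl: "r < p" if "r \<in> Dnsq p 1" for r using that by (simp add: D1_simps D1_simps')
  show "inj_on (\<lambda>(r,q). r + p*q) (Dnsq p 1 \<times> {..<p^(k-1)})"
  proof (rule inj_onI, clarify)
    fix r q r' q' assume a: "r \<in> Dnsq p 1" "r' \<in> Dnsq p 1" "r + p*q = r' + p*q'"
    have "(r + p*q) mod p = r" "(r + p*q) div p = q" using rl[OF a(1)] p0 by auto
    moreover have "(r' + p*q') mod p = r'" "(r' + p*q') div p = q'" using rl[OF a(2)] p0 by auto
    ultimately show "r = r' \<and> q = q'" using a(3) by simp
  qed
  show "Dnsq p k = (\<lambda>(r,q). r + p*q) ` (Dnsq p 1 \<times> {..<p^(k-1)})"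
  proof (rule subset_antisym; rule subsetI)
    fix x assume x: "x \<in> Dnsq p k"
    hence xx: "x < p^k" "x mod p \<in> Dnsq p 1" using Dnsq_mem[OF p k] by auto
    have "x div p < p^(k-1)" using xx(1) pk p0 by (simp add: div_less_iff_less_mult mult.commute)
    moreover have "x = x mod p + p * (x div p)" by simp
    ultimately show "x \<in> (\<lambda>(r,q). r + p*q) ` (Dnsq p 1 \<times> {..<p^(k-1)})" using xx(2)
      by (intro image_eqI[of _ _ "(x mod p, x div p)"]) auto
  next
    fix x assume "x \<in> (\<lambda>(r,q). r + p*q) ` (Dnsq p 1 \<times> {..<p^(k-1)})"
    then obtain r q where rq: "x = r + p*q" "r \<in> Dnsq p 1" "q < p^(k-1)" by auto
    have r: "r < p" using rl[OF rq(2)] .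
    have "r + p*q < p + p*q" using r by simp
    also have "p + p*q = p * (q+1)" by simp
    also have "\<dots> \<le> p * p^(k-1)" using rq(3) by (intro mult_le_mono2) simp
    finally have "x < p^k" using rq pk by simp
    moreover have "x mod p = r" using rq r by simp
    ultimately show "x \<in> Dnsq p k" using Dnsq_mem[OF p k] rq by auto
  qed
qed

lemma om_exp: "omega N ^ j = exp (2 * pi * \<i> * of_nat j / of_nat N)"
  unfolding omega_def by (simp add: exp_of_nat_mult[symmetric] field_simps)

lemma om_N: assumes "N > 0" shows "omega N ^ N = 1"
  using assms by (simp add: om_exp)

lemma om_scale: assumes "d > 0" "N > 0" shows "omega (d*N) ^ d = omega N"
  using assms unfolding om_exp by (simp add: omega_def field_simps)

lemma om_scale2: assumes "d > 0" "N > 0" shows "omega (d*N) ^ (d*j) = omega N ^ j"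
  using om_scale[OF assms] by (simp add: power_mult)

lemma om_one_iff: assumes N: "N > 0" shows "omega N ^ j = 1 \<longleftrightarrow> N dvd j"
proof
  assume "N dvd j"
  then obtain t where "j = N*t" by auto
  thus "omega N ^ j = 1" using om_N[OF N] by (simp add: power_mult)
next
  assume "omega N ^ j = 1"
  hence "exp (2 * pi * \<i> * of_nat j / of_nat N) = 1" by (simp add: om_exp)
  then obtain n :: int where n: "Im (2 * pi * \<i> * of_nat j / of_nat N) = of_int (2*n) * pi"
    unfolding exp_eq_1 by blast
  have "2 * pi * real j / real N = 2 * real_of_int n * pi" using n by simp
  hence "real j = real N * real_of_int n" using N by (simp add: field_simps)
  hence "real_of_int (int j) = real_of_int (int N * n)" by simp
  hence "int j = int N * n" by (simp only: of_int_eq_iff)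
  hence "int N dvd int j" by simp
  thus "N dvd j" by simp
qed

lemma geom_om:
  assumes N: "N > 0"
  shows "(\<Sum>q<N. (omega N ^ c) ^ q) = (if N dvd c then of_nat N else 0)"
proof (cases "N dvd c")
  case True
  hence "omega N ^ c = 1" using om_one_iff[OF N] by simp
  thus ?thesis using True by simp
next
  case False
  hence ne: "omega N ^ c \<noteq> 1" using om_one_iff[OF N] by simp
  have "(omega N ^ c) ^ N = 1" using om_N[OF N] by (metis power_mult mult.commute power_one)
  thus ?thesis using geometric_sum[OF ne, of N] False by simp
qed

lemma T_formula:
  fixes p k a :: nat
  assumes p: "prime p" "odd p" and k: "k \<ge> 1"
  shows "(\<Sum>x\<in>Dnsq p k. (omega (p^k) ^ a) ^ x) =
     (if p^(k-1) dvd a then of_nat (p^(k-1)) * (\<Sum>r\<in>Dnsq p 1. (omega (p^k) ^ a) ^ r) else 0)"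
proof -
  have p0: "p > 0" using p prime_gt_0_nat by blast
  have pk: "p^k = p * p^(k-1)" using k by (simp add: power_eq_if)
  define w where "w = omega (p^k) ^ a"
  have wp: "w ^ p = omega (p^(k-1)) ^ a"
    unfolding w_def pk using om_scale2[OF p0, of "p^(k-1)" a] p0 by (simp add: power_mult[symmetric] mult.commute)
  have fin: "finite (Dnsq p 1)" by (simp add: D1_simps D1_simps')
  have "(\<Sum>x\<in>Dnsq p k. w ^ x) = (\<Sum>(r,q)\<in>Dnsq p 1 \<times> {..<p^(k-1)}. w ^ (r + p*q))"
    using Dnsq_decomp[OF p k] by (simp add: sum.reindex case_prod_unfold)
  also have "\<dots> = (\<Sum>r\<in>Dnsq p 1. \<Sum>q<p^(k-1). w ^ (r + p*q))"
    by (rule sum.cartesian_product[symmetric])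
  also have "\<dots> = (\<Sum>r\<in>Dnsq p 1. w^r * (\<Sum>q<p^(k-1). (w^p)^q))"
    by (simp add: power_add power_mult sum_distrib_left)
  also have "\<dots> = (\<Sum>r\<in>Dnsq p 1. w^r * (if p^(k-1) dvd a then of_nat (p^(k-1)) else 0))"
    unfolding wp using geom_om[of "p^(k-1)" a] p0 by simp
  also have "(\<Sum>r\<in>Dnsq p 1. w^r * (if p^(k-1) dvd a then of_nat (p^(k-1)) else 0)) = (\<Sum>r\<in>Dnsq p 1. w^r) * (if p^(k-1) dvd a then of_nat (p^(k-1)) else 0)"
    by (rule sum_distrib_right[symmetric])
  finally show ?thesis by (cases "p^(k-1) dvd a") (simp_all add: w_def mult.commute)
qed



lemma scaledD_eq:
  fixes p n k :: nat
  assumes p: "prime p" and k: "k \<le> n"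
  shows "scaledD (n-k) i p k = (\<lambda>x. p^(n-k) * x) ` D i p k"
proof -
  have nk: "n - k + k = n" using k by simp
  have lt: "x < p^k" if "x \<in> D i p k" for x using that by (cases "i = 0") (auto simp: D_def Dsq_def Dnsq_def)
  have "(p^(n-k) * x) mod p^n = p^(n-k) * x" if "x \<in> D i p k" for x
  proof -
    have "p^(n-k) * x < p^(n-k) * p^k" using lt[OF that] p prime_gt_0_nat by simp
    also have "\<dots> = p^n" using nk by (simp add: power_add[symmetric])
    finally show ?thesis by simp
  qed
  thus ?thesis unfolding scaledD_def nk by (intro image_cong) auto
qed

lemma scaled_elem:
  fixes p n k y :: nat
  assumes p: "prime p" "odd p" and k: "1 \<le> k" "k \<le> n" and y: "y \<in> scaledD (n-k) 1 p k"
  shows "y < p^n" "y \<noteq> 0" "p^(n-k) dvd y" "\<not> p^(n-k+1) dvd y"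
proof -
  obtain x where x: "x \<in> Dnsq p k" "y = p^(n-k) * x" using y scaledD_eq[OF p(1) k(2), of 1] by (auto simp: D_def)
  have xl: "x < p^k" "coprime x p" using x by (auto simp: Dnsq_def)
  have p0: "p > 0" using p prime_gt_0_nat by blast
  have nk: "n - k + k = n" using k by simp
  have "y < p^(n-k) * p^k" using xl p0 x by simp
  thus "y < p^n" using nk by (simp add: power_add[symmetric])
  have "x \<noteq> 0" using xl p prime_gt_1_nat by (cases "x = 0") auto
  thus "y \<noteq> 0" using x p0 by simp
  show "p^(n-k) dvd y" using x by simp
  show "\<not> p^(n-k+1) dvd y"
  proof
    assume "p^(n-k+1) dvd y"
    hence "p^(n-k) * p dvd p^(n-k) * x" using x by simp
    hence "p dvd x" using p0 by (simp add: dvd_mult_cancel_left)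
    hence "is_unit p" using coprime_common_divisor[OF xl(2) _ dvd_refl] by blast
    thus False using p(1) not_prime_unit by blast
  qed
qed

lemma S_decomp:
  fixes p n a :: nat
  assumes p: "prime p" "odd p" and n: "n \<ge> 1"
  shows "S_poly p n (omega (p^n) ^ a) = 1 + (\<Sum>k\<in>{1..n}. \<Sum>x\<in>Dnsq p k. (omega (p^k) ^ a) ^ x)"
proof -
  define z where "z = omega (p^n) ^ a"
  define A where "A k = scaledD (n-k) 1 p k" for k
  have p0: "p > 0" using p prime_gt_0_nat by blast
  have C1e: "C1 p n = insert 0 (\<Union>k\<in>{1..n}. A k)" by (auto simp: C1_def A_def)
  have Asub: "A k \<subseteq> {..<p^n}" if "k \<in> {1..n}" for k using scaled_elem[OF p, of k n] that by (auto simp: A_def)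
  have A0: "0 \<notin> A k" if "k \<in> {1..n}" for k using scaled_elem[OF p, of k n] that by (auto simp: A_def)
  have finA: "finite (A k)" if "k \<in> {1..n}" for k using Asub[OF that] finite_subset by blast
  have "(\<Union>k\<in>{1..n}. A k) \<subseteq> {..<p^n}" by (intro UN_least Asub)
  hence C1sub: "C1 p n \<subseteq> {..<p^n}" using p0 unfolding C1e by simp
  have disj: "A k \<inter> A j = {}" if "k \<in> {1..n}" "j \<in> {1..n}" "k \<noteq> j" for k j
  proof -
    have gen: "A k \<inter> A j = {}" if "k \<in> {1..n}" "j \<in> {1..n}" "k < j" for k j
    proof (rule ccontr)
      assume "A k \<inter> A j \<noteq> {}"
      then obtain y where y: "y \<in> A k" "y \<in> A j" by blast
      have "p^(n-k) dvd y" using scaled_elem[OF p, of k n y] that y by (auto simp: A_def)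
      moreover have "\<not> p^(n-j+1) dvd y" using scaled_elem[OF p, of j n y] that y by (auto simp: A_def)
      moreover have "p^(n-j+1) dvd p^(n-k)" using that by (intro le_imp_power_dvd) auto
      ultimately show False using dvd_trans by blast
    qed
    show ?thesis
    proof (cases "k < j")
      case True thus ?thesis using gen that by blast
    next
      case False hence "j < k" using that by simp
      thus ?thesis using gen[of j k] that by blast
    qed
  qed
  have "S_poly p n z = (\<Sum>i<p^n. if i \<in> C1 p n then z^i else 0)"
    unfolding S_poly_def dh_seq_def by (intro sum.cong) auto
  also have "\<dots> = (\<Sum>i\<in>{..<p^n} \<inter> C1 p n. z^i)" by (rule sum.inter_restrict[symmetric]) simp
  also have "{..<p^n} \<inter> C1 p n = C1 p n" using C1sub by blast
  also have "(\<Sum>i\<in>C1 p n. z^i) = z^0 + (\<Sum>i\<in>(\<Union>k\<in>{1..n}. A k). z^i)"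
    unfolding C1e using A0 finA by (subst sum.insert) auto
  also have "(\<Sum>i\<in>(\<Union>k\<in>{1..n}. A k). z^i) = (\<Sum>k\<in>{1..n}. \<Sum>i\<in>A k. z^i)"
    using finA disj by (intro sum.UNION_disjoint) auto
  also have "\<dots> = (\<Sum>k\<in>{1..n}. \<Sum>x\<in>Dnsq p k. (omega (p^k) ^ a) ^ x)"
  proof (rule sum.cong[OF refl])
    fix k assume k: "k \<in> {1..n}"
    have Ak: "A k = (\<lambda>x. p^(n-k) * x) ` Dnsq p k" using scaledD_eq[OF p(1), of k n 1] k by (simp add: A_def D_def)
    have inj: "inj_on (\<lambda>x. p^(n-k) * x) (Dnsq p k)" using p0 by (auto simp: inj_on_def)
    have pn: "p^n = p^(n-k) * p^k" using k by (simp add: power_add[symmetric])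
    have "(\<Sum>i\<in>A k. z^i) = (\<Sum>x\<in>Dnsq p k. z^(p^(n-k) * x))" unfolding Ak by (simp add: sum.reindex[OF inj])
    also have "\<dots> = (\<Sum>x\<in>Dnsq p k. (omega (p^k) ^ a) ^ x)"
    proof (rule sum.cong[OF refl])
      fix x
      have "z^(p^(n-k) * x) = omega (p^(n-k) * p^k) ^ (p^(n-k) * (a*x))"
        unfolding z_def pn by (simp add: power_mult[symmetric] ac_simps)
      also have "\<dots> = omega (p^k) ^ (a*x)" using p0 by (intro om_scale2) auto
      finally show "z^(p^(n-k) * x) = (omega (p^k) ^ a) ^ x" by (simp add: power_mult)
    qed
    finally show "(\<Sum>i\<in>A k. z^i) = (\<Sum>x\<in>Dnsq p k. (omega (p^k) ^ a) ^ x)" .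
  qed
  finally show ?thesis by (simp add: z_def)
qed



lemma eta_sum: "eta i p = (\<Sum>s\<in>D i p 1. omega p ^ s)"
  unfolding eta_def by (simp add: om_exp)

lemma om_mod: assumes "N > 0" shows "omega N ^ j = omega N ^ (j mod N)"
proof -
  have "omega N ^ j = omega N ^ (N * (j div N) + j mod N)" by simp
  also have "\<dots> = (omega N ^ N) ^ (j div N) * omega N ^ (j mod N)" by (simp only: power_add power_mult)
  finally show ?thesis using om_N[OF assms] by simp
qed

lemma eta_twist:
  fixes p x :: nat
  assumes p: "prime p" "odd p" and cx: "coprime x p"
  shows "(\<Sum>r\<in>Dnsq p 1. (omega p ^ x) ^ r) = (if sqm p x then eta 1 p else eta 0 p)"
proof -
  have p0: "p > 0" using p prime_gt_0_nat by blast
  define f where "f r = x * r mod p" for r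
  have sub: "Dnsq p 1 \<subseteq> {..<p}" by (auto simp: D1_simps D1_simps')
  have inj: "inj_on f (Dnsq p 1)" using mul_inj[OF cx] sub unfolding f_def by (rule inj_on_subset)
  have fin: "finite (Dnsq p 1)" "finite (Dsq p 1)" by (auto simp: D1_simps D1_simps')
  have fr: "f r < p \<and> coprime (f r) p \<and> (sqm p (f r) \<longleftrightarrow> (sqm p x \<longleftrightarrow> sqm p r))" if "coprime r p" for r
    using qr_mult[OF p cx that] cx that p0 by (simp add: f_def sqm_mod)
  have img: "f ` Dnsq p 1 = D (if sqm p x then 1 else 0) p 1"
  proof (cases "sqm p x")
    case True
    have "f ` Dnsq p 1 \<subseteq> Dnsq p 1" using fr True by (auto simp: D1_simps D1_simps')
    hence "f ` Dnsq p 1 = Dnsq p 1" using endo_inj_surj[OF fin(1) _ inj] by blast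
    thus ?thesis using True by (simp add: D_def)
  next
    case False
    have s: "f ` Dnsq p 1 \<subseteq> Dsq p 1" using fr False by (auto simp: D1_simps D1_simps')
    have "card (f ` Dnsq p 1) = card (Dsq p 1)" using card_image[OF inj] card_D1[OF p] by simp
    hence "f ` Dnsq p 1 = Dsq p 1" using card_subset_eq[OF fin(2) s] by blast
    thus ?thesis using False by (simp add: D_def)
  qed
  have "(\<Sum>r\<in>Dnsq p 1. (omega p ^ x) ^ r) = (\<Sum>r\<in>Dnsq p 1. omega p ^ f r)"
    by (intro sum.cong refl) (simp add: f_def power_mult[symmetric] om_mod[OF p0, of "x*r" for r])
  also have "\<dots> = (\<Sum>s\<in>f ` Dnsq p 1. omega p ^ s)" using sum.reindex[OF inj, of "\<lambda>s. omega p ^ s"] by (simp add: comp_def)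
  also have "\<dots> = eta (if sqm p x then 1 else 0) p" unfolding img eta_sum ..
  finally show ?thesis by simp
qed

lemma half_odd:
  fixes p :: nat assumes "odd p"
  shows "(of_nat ((p - 1) div 2) :: complex) = (of_nat p - 1) / 2"
proof -
  obtain q where q: "p = 2*q + 1" using assms oddE by blast
  thus ?thesis by simp
qed

lemma geo_half:
  fixes p m :: nat assumes "odd p"
  shows "(\<Sum>k\<in>{1..m}. of_nat (p^(k-1)) * ((of_nat p - 1) / 2 :: complex)) = (of_nat (p^m) - 1) / 2"
proof (induction m)
  case 0 thus ?case by simp
next
  case (Suc m)
  have "(\<Sum>k\<in>{1..Suc m}. of_nat (p^(k-1)) * ((of_nat p - 1) / 2 :: complex))
      = (\<Sum>k\<in>{1..m}. of_nat (p^(k-1)) * ((of_nat p - 1) / 2 :: complex)) + of_nat (p^m) * ((of_nat p - 1) / 2)"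
    by (simp add: atLeastAtMostSuc_conv)
  also have "\<dots> = (of_nat (p^m) - 1) / 2 + of_nat (p^m) * ((of_nat p - 1) / 2)" using Suc.IH by simp
  also have "\<dots> = (of_nat (p^Suc m) - 1) / 2" by (simp add: field_simps)
  finally show ?case .
qed

lemma sum_split:
  fixes f :: "nat \<Rightarrow> complex"
  assumes "m < n"
  shows "(\<Sum>k\<in>{1..n}. if k \<le> m then f k else if k = Suc m then c else 0) = (\<Sum>k\<in>{1..m}. f k) + c"
proof -
  have "Suc m \<le> n" using assms by simp
  thus ?thesis
proof (induction n rule: dec_induct)
  case base
  have "(\<Sum>k\<in>{1..Suc m}. if k \<le> m then f k else if k = Suc m then c else 0)
        = (\<Sum>k\<in>{1..m}. if k \<le> m then f k else if k = Suc m then c else 0) + c"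
    by (simp add: atLeastAtMostSuc_conv)
  also have "(\<Sum>k\<in>{1..m}. if k \<le> m then f k else if k = Suc m then c else 0) = (\<Sum>k\<in>{1..m}. f k)"
    by (intro sum.cong) auto
  finally show ?case .
next
  case (step n)
  have "(\<Sum>k\<in>{1..Suc n}. if k \<le> m then f k else if k = Suc m then c else 0)
        = (\<Sum>k\<in>{1..n}. if k \<le> m then f k else if k = Suc m then c else 0)"
    using step(1) by (simp add: atLeastAtMostSuc_conv)
  thus ?case using step by simp
qed
qed



lemma dvd_pm:
  fixes p m x j :: nat
  assumes p: "prime p" and cx: "coprime x p"
  shows "p^j dvd p^m * x \<longleftrightarrow> j \<le> m"
proof
  assume d: "p^j dvd p^m * x"
  show "j \<le> m"
  proof (rule ccontr)
    assume "\<not> j \<le> m"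
    hence "p^(Suc m) dvd p^j" by (intro le_imp_power_dvd) simp
    hence "p^(Suc m) dvd p^m * x" using d by (rule dvd_trans)
    hence "p^m * p dvd p^m * x" by (simp only: power_Suc2)
    hence "p dvd x" using p prime_gt_0_nat by (simp add: dvd_mult_cancel_left)
    hence "is_unit p" using coprime_common_divisor[OF cx _ dvd_refl] by blast
    thus False using p not_prime_unit by blast
  qed
next
  assume "j \<le> m" thus "p^j dvd p^m * x" by (simp add: le_imp_power_dvd dvd_mult2)
qed

lemma T_one:
  fixes p k :: nat
  assumes p: "prime p" "odd p" and k: "k \<ge> 1" and d: "p^k dvd a"
  shows "(\<Sum>x\<in>Dnsq p k. (omega (p^k) ^ a) ^ x) = of_nat (p^(k-1)) * ((of_nat p - 1) / 2)"
proof -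
  have p0: "p > 0" using p prime_gt_0_nat by blast
  have w: "omega (p^k) ^ a = 1" using om_one_iff[of "p^k" a] p0 d by simp
  have "p^(k-1) dvd a" using d k by (meson dvd_trans le_imp_power_dvd diff_le_self)
  hence "(\<Sum>x\<in>Dnsq p k. (omega (p^k) ^ a) ^ x) = of_nat (p^(k-1)) * of_nat (card (Dnsq p 1))"
    using T_formula[OF p k, of a] w by simp
  thus ?thesis using card_D1[OF p] half_odd[OF p(2)] by simp
qed

lemma main_case:
  fixes p n a m i :: nat
  assumes p: "prime p" "odd p" and m: "m < n" and a: "a \<in> scaledD m i p (n - m)"
  shows "S_poly p n (omega (p^n) ^ a) = (of_nat (p^m) + 1) / 2 + of_nat (p^m) * eta (if i = 0 then 1 else 0) p"
proof -
  have p0: "p > 0" using p prime_gt_0_nat by blast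
  have n1: "n \<ge> 1" using m by simp
  have nm: "m + (n - m) = n" "n - m \<ge> 1" using m by auto
  obtain x where x: "x \<in> D i p (n-m)" "a = (p^m * x) mod p^n" using a nm unfolding scaledD_def by auto
  have xl: "x < p^(n-m)" using x(1) by (cases "i = 0") (auto simp: D_def Dsq_def Dnsq_def)
  have "p^m * x < p^m * p^(n-m)" using xl p0 by simp
  also have "\<dots> = p^n" using nm by (simp add: power_add[symmetric])
  finally have ax: "a = p^m * x" using x(2) by simp
  have cx: "coprime x p" and sq: "sqm p x \<longleftrightarrow> i = 0"
  proof -
    show "coprime x p" using x(1) by (cases "i = 0") (auto simp: D_def Dsq_def Dnsq_def)
    show "sqm p x \<longleftrightarrow> i = 0"
    proof (cases "i = 0")
      case True
      hence "x mod p \<in> Dsq p 1" using Dsq_mod[OF p nm(2)] x(1) by (simp add: D_def)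
      hence "sqm p (x mod p)" by (simp add: D1_simps D1_simps')
      thus ?thesis using True sqm_mod by simp
    next
      case False
      hence "x mod p \<in> Dnsq p 1" using Dnsq_mod[OF p nm(2)] x(1) by (simp add: D_def)
      hence "\<not> sqm p (x mod p)" by (simp add: D1_simps D1_simps')
      thus ?thesis using False sqm_mod by simp
    qed
  qed
  define E where "E = eta (if i = 0 then 1 else 0) p"
  define h where "h = ((of_nat p - 1) / 2 :: complex)"
  have T: "(\<Sum>y\<in>Dnsq p k. (omega (p^k) ^ a) ^ y) =
        (if k \<le> m then of_nat (p^(k-1)) * h else if k = Suc m then of_nat (p^m) * E else 0)"
    if k: "k \<in> {1..n}" for k
  proof -
    have k1: "k \<ge> 1" using k by simp
    consider "k \<le> m" | "k = Suc m" | "k > Suc m" by linarith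
    thus ?thesis
    proof cases
      case 1
      have "p^k dvd a" using dvd_pm[OF p(1) cx, of k m] 1 ax by simp
      thus ?thesis using T_one[OF p k1] 1 by (simp add: h_def)
    next
      case 2
      have dv: "p^(k-1) dvd a" using ax 2 by simp
      have "omega (p^k) ^ a = omega (p^m * p) ^ (p^m * x)" using 2 ax by (simp add: mult.commute)
      also have "\<dots> = omega p ^ x" using p0 by (intro om_scale2) auto
      finally have w: "omega (p^k) ^ a = omega p ^ x" .
      have "(\<Sum>y\<in>Dnsq p k. (omega (p^k) ^ a) ^ y) = of_nat (p^(k-1)) * (\<Sum>r\<in>Dnsq p 1. (omega p ^ x) ^ r)"
        using T_formula[OF p k1, of a] dv w by simp
      also have "(\<Sum>r\<in>Dnsq p 1. (omega p ^ x) ^ r) = E"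
        using eta_twist[OF p cx] sq by (simp add: E_def)
      finally show ?thesis using 2 by simp
    next
      case 3
      have "\<not> p^(k-1) dvd a" using dvd_pm[OF p(1) cx, of "k-1" m] 3 ax by simp
      thus ?thesis using T_formula[OF p k1, of a] 3 by simp
    qed
  qed
  have "S_poly p n (omega (p^n) ^ a) = 1 + (\<Sum>k\<in>{1..n}. \<Sum>y\<in>Dnsq p k. (omega (p^k) ^ a) ^ y)"
    by (rule S_decomp[OF p n1])
  also have "(\<Sum>k\<in>{1..n}. \<Sum>y\<in>Dnsq p k. (omega (p^k) ^ a) ^ y) =
      (\<Sum>k\<in>{1..n}. if k \<le> m then of_nat (p^(k-1)) * h else if k = Suc m then of_nat (p^m) * E else 0)"
    using T by (rule sum.cong[OF refl])
  also have "\<dots> = (\<Sum>k\<in>{1..m}. of_nat (p^(k-1)) * h) + of_nat (p^m) * E"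
    by (rule sum_split[OF m])
  also have "(\<Sum>k\<in>{1..m}. of_nat (p^(k-1)) * h) = (of_nat (p^m) - 1) / 2"
    unfolding h_def by (rule geo_half[OF p(2)])
  finally show ?thesis by (simp add: E_def field_simps)
qed

theorem mainTheorem2:
  fixes p n a :: nat
  assumes "prime p" and "odd p" and "n \<ge> 1" and "a < p^n"
  shows "(a = 0 \<longrightarrow> S_poly p n (omega (p^n) ^ a) = (of_nat (p^n) + 1) / 2)
       \<and> (\<forall>m<n. a \<in> scaledD m 0 p (n - m) \<longrightarrow>
            S_poly p n (omega (p^n) ^ a) = (of_nat (p^m) + 1) / 2 + of_nat (p^m) * eta 1 p)
       \<and> (\<forall>m<n. a \<in> scaledD m 1 p (n - m) \<longrightarrow>
            S_poly p n (omega (p^n) ^ a) = (of_nat (p^m) + 1) / 2 + of_nat (p^m) * eta 0 p)"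
proof (intro conjI impI allI)
  have p: "prime p" "odd p" using assms by auto
  show "S_poly p n (omega (p^n) ^ a) = (of_nat (p^n) + 1) / 2" if a0: "a = 0"
  proof -
    have "S_poly p n (omega (p^n) ^ a) = 1 + (\<Sum>k\<in>{1..n}. \<Sum>y\<in>Dnsq p k. (omega (p^k) ^ a) ^ y)"
      by (rule S_decomp[OF p assms(3)])
    also have "(\<Sum>k\<in>{1..n}. \<Sum>y\<in>Dnsq p k. (omega (p^k) ^ a) ^ y) =
        (\<Sum>k\<in>{1..n}. of_nat (p^(k-1)) * ((of_nat p - 1) / 2))"
    proof (rule sum.cong[OF refl])
      fix k assume "k \<in> {1..n}"
      hence k1: "k \<ge> 1" by simp
      show "(\<Sum>y\<in>Dnsq p k. (omega (p^k) ^ a) ^ y) = of_nat (p^(k-1)) * ((of_nat p - 1) / 2)"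
        unfolding a0 by (rule T_one[OF p k1]) simp
    qed
    also have "\<dots> = (of_nat (p^n) - 1) / 2" by (rule geo_half[OF p(2)])
    finally show ?thesis by (simp add: field_simps)
  qed
  show "S_poly p n (omega (p^n) ^ a) = (of_nat (p^m) + 1) / 2 + of_nat (p^m) * eta 1 p"
    if "m < n" "a \<in> scaledD m 0 p (n - m)" for m
    using main_case[OF p that] by simp
  show "S_poly p n (omega (p^n) ^ a) = (of_nat (p^m) + 1) / 2 + of_nat (p^m) * eta 0 p"
    if "m < n" "a \<in> scaledD m 1 p (n - m)" for m
    using main_case[OF p that] by simp
qed


end
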